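(* For every integer $d\geq 2$ and every integer $n\geq d^{12d\log d}$, $$1<\frac{\log p_d(n)}{n^{1-\frac{1}{d}}}<d^2.$$
   Context: $\mathbb{Z}_+=\{0,1,2,\dots\}$. A set $S\subset\mathbb{Z}_+^d$ is a lower set if whenever $\mathbf{x}\in S$ and $\mathbf{x}'\in\mathbb{Z}_+^d$ satisfies $x'_i\leq x_i$ for all $i$, then $\mathbf{x}'\in S$. $p_d(n)$ denotes the number of lower sets in $\mathbb{Z}_+^d$ with exactly $n$ points. $\log$ is the natural logarithm. *)

theory Defs
  imports "HOL-Analysis.Analysis"
begin

text \<open>Points of Z_+^d are represented as functions nat => nat vanishing at all
  coordinates i >= d (coordinates 0..d-1 are the genuine ones).\<close>

definition lattice_pts :: "nat \<Rightarrow> (nat \<Rightarrow> nat) set" where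
  "lattice_pts d = {x. \<forall>i\<ge>d. x i = 0}"

definition lower_set :: "nat \<Rightarrow> (nat \<Rightarrow> nat) set \<Rightarrow> bool" where
  "lower_set d S \<longleftrightarrow> S \<subseteq> lattice_pts d \<and>
     (\<forall>x\<in>S. \<forall>x'\<in>lattice_pts d. (\<forall>i<d. x' i \<le> x i) \<longrightarrow> x' \<in> S)"

definition p :: "nat \<Rightarrow> nat \<Rightarrow> nat" where
  "p d n = card {S. lower_set d S \<and> finite S \<and> card S = n}"

end

theory Submission
  imports Defs
begin

lemma lower_setD: "lower_set d S \<Longrightarrow> x \<in> S \<Longrightarrow> x' \<in> lattice_pts d \<Longrightarrow> (\<And>i. i < d \<Longrightarrow> x' i \<le> x i) \<Longrightarrow> x' \<in> S"
  unfolding lower_set_def by blast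

lemma lower_set_sub: "lower_set d S \<Longrightarrow> x \<in> S \<Longrightarrow> x \<in> lattice_pts d"
  unfolding lower_set_def by blast

lemma coord_bound:
  assumes L: "lower_set d S" and F: "finite S" and x: "x \<in> S" and i: "i < d"
  shows "x i < card S"
proof -
  have xl: "x \<in> lattice_pts d" using lower_set_sub[OF L x] .
  have sub: "(\<lambda>t. x(i:=t)) ` {0..x i} \<subseteq> S"
  proof
    fix z assume "z \<in> (\<lambda>t. x(i:=t)) ` {0..x i}"
    then obtain t where t: "t \<le> x i" "z = x(i:=t)" by auto
    have "z \<in> lattice_pts d" using xl i t unfolding lattice_pts_def by auto
    moreover have "\<And>j. j < d \<Longrightarrow> z j \<le> x j" using t by auto
    ultimately show "z \<in> S" using lower_setD[OF L x] by blast
  qed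
  have inj: "inj_on (\<lambda>t. x(i:=t)) {0..x i}"
    by (rule inj_onI) (metis fun_upd_same)
  have "card ((\<lambda>t. x(i:=t)) ` {0..x i}) \<le> card S" using card_mono[OF F sub] .
  then show ?thesis using card_image[OF inj] by simp
qed

definition bx :: "nat \<Rightarrow> nat \<Rightarrow> (nat \<Rightarrow> nat) set" where
  "bx d n = {x. (\<forall>i. (i \<in> {..<d} \<longrightarrow> x i \<in> {..<n}) \<and> (i \<notin> {..<d} \<longrightarrow> x i = 0))}"

lemma finite_bx: "finite (bx d n)"
  unfolding bx_def by (rule finite_set_of_finite_funs) auto

lemma lower_in_box:
  assumes "lower_set d S" "finite S" "card S \<le> n"
  shows "S \<subseteq> bx d n"
proof
  fix x assume x: "x \<in> S"
  have "x \<in> lattice_pts d" using lower_set_sub assms x by blast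
  then show "x \<in> bx d n" using coord_bound[OF assms(1,2) x] assms(3)
    unfolding bx_def lattice_pts_def by (auto intro: less_le_trans)
qed

lemma finite_class: "finite {S. lower_set d S \<and> finite S \<and> card S = n}"
proof (rule finite_subset[of _ "Pow (bx d n)"])
  show "{S. lower_set d S \<and> finite S \<and> card S = n} \<subseteq> Pow (bx d n)"
    using lower_in_box by fastforce
qed (simp add: finite_bx)

lemma downclosed_nat:
  fixes A :: "nat set"
  assumes "finite A" "\<And>a b. a \<in> A \<Longrightarrow> b \<le> a \<Longrightarrow> b \<in> A"
  shows "A = {..<card A}"
proof (cases "A = {}")
  case True then show ?thesis by simp
next
  case False
  have M: "Max A \<in> A" using assms(1) False by (rule Max_in)
  have "A = {..Max A}"
    using assms M by (auto intro: Max_ge)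
  then show ?thesis by (metis card_atMost lessThan_Suc_atMost)
qed

definition ax :: "nat \<Rightarrow> nat \<Rightarrow> nat" where "ax a = (\<lambda>i. if i = 0 then a else 0)"

definition grow :: "(nat \<Rightarrow> nat) set \<Rightarrow> (nat \<Rightarrow> nat) set" where
  "grow S = insert (ax (card {a. ax a \<in> S})) S"

lemma ax_inj: "ax a = ax b \<Longrightarrow> a = b"
  unfolding ax_def by (metis)

lemma axset:
  assumes L: "lower_set d S" and F: "finite S" and d: "d \<ge> 1"
  shows "{a. ax a \<in> S} = {..<card {a. ax a \<in> S}}"
proof (rule downclosed_nat)
  show "finite {a. ax a \<in> S}"
    using finite_vimageI[OF F, of ax] ax_inj unfolding inj_on_def vimage_def by blast
  fix a b assume a: "a \<in> {a. ax a \<in> S}" and b: "b \<le> a"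
  have "ax b \<in> lattice_pts d" using d unfolding lattice_pts_def ax_def by auto
  moreover have "\<And>i. i < d \<Longrightarrow> ax b i \<le> ax a i" using b unfolding ax_def by auto
  ultimately show "b \<in> {a. ax a \<in> S}" using lower_setD[OF L] a by blast
qed

lemma grow_props:
  assumes L: "lower_set d S" and F: "finite S" and d: "d \<ge> 1"
  shows "lower_set d (grow S)" "finite (grow S)" "card (grow S) = Suc (card S)"
    "card {a. ax a \<in> grow S} = Suc (card {a. ax a \<in> S})"
proof -
  define a0 where "a0 = card {a. ax a \<in> S}"
  have A: "{a. ax a \<in> S} = {..<a0}" using axset[OF assms] a0_def by simp
  have nin: "ax a0 \<notin> S" using A by auto
  show "finite (grow S)" using F unfolding grow_def by simp
  show "card (grow S) = Suc (card S)" using F nin unfolding grow_def a0_def by simp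
  have "{a. ax a \<in> grow S} = insert a0 {..<a0}"
    unfolding grow_def a0_def[symmetric] using A ax_inj by auto
  then show "card {a. ax a \<in> grow S} = Suc (card {a. ax a \<in> S})"
    using a0_def by simp
  have axl: "ax a0 \<in> lattice_pts d" using d unfolding lattice_pts_def ax_def by auto
  show "lower_set d (grow S)"
    unfolding lower_set_def
  proof (intro conjI ballI impI)
    show "grow S \<subseteq> lattice_pts d" using L axl unfolding grow_def lower_set_def a0_def by auto
    fix x x' assume x: "x \<in> grow S" and x': "x' \<in> lattice_pts d" and le: "\<forall>i<d. x' i \<le> x i"
    show "x' \<in> grow S"
    proof (cases "x \<in> S")
      case True then show ?thesis using lower_setD[OF L True x'] le unfolding grow_def by auto
    next
      case False
      then have xe: "x = ax a0" using x unfolding grow_def a0_def by auto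
      have "x' = ax (x' 0)"
      proof
        fix i show "x' i = ax (x' 0) i"
        proof (cases "i < d")
          case True then have "x' i \<le> x i" using le by blast
          show ?thesis
          proof (cases "i = 0")
            case True then show ?thesis by (simp add: ax_def)
          next
            case False
            then have "x i = 0" using xe by (simp add: ax_def)
            then show ?thesis using \<open>x' i \<le> x i\<close> False by (simp add: ax_def)
          qed
        next
          case False then show ?thesis using x' d unfolding ax_def lattice_pts_def by auto
        qed
      qed
      moreover have "x' 0 \<le> a0" using le xe d unfolding ax_def by auto
      have gi: "grow S = insert (ax a0) S" unfolding grow_def a0_def by simp
      show ?thesis
      proof (cases "x' 0 = a0")
        case True then show ?thesis using \<open>x' = ax (x' 0)\<close> gi by simp
      next
        case False
        then have "x' 0 \<in> {..<a0}" using \<open>x' 0 \<le> a0\<close> by simp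
        then have "ax (x' 0) \<in> S" using A by blast
        then show ?thesis using \<open>x' = ax (x' 0)\<close> gi by simp
      qed
    qed
  qed
qed

lemma grow_inj:
  assumes "lower_set d S1" "finite S1" "lower_set d S2" "finite S2" "d \<ge> 1"
    and eq: "grow S1 = grow S2"
  shows "S1 = S2"
proof -
  have c: "card {a. ax a \<in> S1} = card {a. ax a \<in> S2}"
    using grow_props(4)[OF assms(1,2,5)] grow_props(4)[OF assms(3,4,5)] eq by simp
  have n1: "ax (card {a. ax a \<in> S1}) \<notin> S1" using axset[OF assms(1,2,5)] by auto
  have n2: "ax (card {a. ax a \<in> S2}) \<notin> S2" using axset[OF assms(3,4,5)] by auto
  show ?thesis using eq n1 n2 c unfolding grow_def
    by (metis insert_ident)
qed

lemma p_mono_Suc: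
  assumes "d \<ge> 1" shows "p d n \<le> p d (Suc n)"
  unfolding p_def
proof (rule card_inj_on_le[where f = grow])
  show "inj_on grow {S. lower_set d S \<and> finite S \<and> card S = n}"
    using grow_inj assms by (auto simp: inj_on_def)
  show "grow ` {S. lower_set d S \<and> finite S \<and> card S = n} \<subseteq> {S. lower_set d S \<and> finite S \<and> card S = Suc n}"
    using grow_props assms by auto
qed (rule finite_class)

lemma p_mono:
  assumes "d \<ge> 1" "a \<le> b" shows "p d a \<le> p d b"
  using assms(2)
proof (induction b)
  case 0 then show ?case by simp
next
  case (Suc b) then show ?case using p_mono_Suc[OF assms(1), of b] by (cases "a = Suc b") auto
qed

lemma count_le_p:
  assumes d: "d \<ge> 1" and FS: "\<And>T. T \<in> F \<Longrightarrow> lower_set d T \<and> finite T \<and> card T \<le> n"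
  shows "card F \<le> (n + 1) * p d n"
proof -
  have "F \<subseteq> (\<Union>j\<in>{..n}. {S. lower_set d S \<and> finite S \<and> card S = j})" using FS by auto
  then have "card F \<le> card (\<Union>j\<in>{..n}. {S. lower_set d S \<and> finite S \<and> card S = j})"
    by (rule card_mono[rotated]) (auto intro: finite_class)
  also have "\<dots> \<le> (\<Sum>j\<in>{..n}. card {S. lower_set d S \<and> finite S \<and> card S = j})"
    by (rule card_UN_le) simp
  also have "\<dots> \<le> (\<Sum>j\<in>{..n}. p d n)"
    by (rule sum_mono) (use p_mono[OF d] in \<open>auto simp: p_def\<close>)
  also have "\<dots> = (n+1) * p d n" by simp
  finally show ?thesis .
qed

definition col :: "(nat \<Rightarrow> nat) set \<Rightarrow> nat \<Rightarrow> (nat \<Rightarrow> nat) \<Rightarrow> nat set" where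
  "col S k y = {t. y(k := t) \<in> S}"
definition hh :: "(nat \<Rightarrow> nat) set \<Rightarrow> nat \<Rightarrow> (nat \<Rightarrow> nat) \<Rightarrow> nat" where
  "hh S k y = card (col S k y)"
definition up :: "nat \<Rightarrow> (nat \<Rightarrow> nat) \<Rightarrow> (nat \<Rightarrow> nat)" where
  "up i y = y(i := Suc (y i))"
definition mm :: "(nat \<Rightarrow> nat) set \<Rightarrow> nat \<Rightarrow> (nat \<Rightarrow> nat) \<Rightarrow> nat" where
  "mm S k y = hh S k y - Max ((\<lambda>i. hh S k (up i y)) ` {..<k})"

context
  fixes S :: "(nat \<Rightarrow> nat) set" and k :: nat
  assumes L: "lower_set (Suc k) S" and F: "finite S"
begin

lemma col_finite: "finite (col S k y)"
proof -
  have "inj (\<lambda>t. y(k:=t))" by (rule injI) (metis fun_upd_same)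
  then show ?thesis unfolding col_def using finite_vimageI[OF F] unfolding vimage_def by blast
qed

lemma col_eq: "col S k y = {..<hh S k y}"
  unfolding hh_def
proof (rule downclosed_nat[OF col_finite])
  fix a b assume a: "a \<in> col S k y" and b: "b \<le> a"
  have ya: "y(k:=a) \<in> S" using a unfolding col_def by simp
  have "y(k:=a) \<in> lattice_pts (Suc k)" using lower_set_sub[OF L ya] .
  then have "y(k:=b) \<in> lattice_pts (Suc k)" unfolding lattice_pts_def by auto
  moreover have "\<And>i. i < Suc k \<Longrightarrow> (y(k:=b)) i \<le> (y(k:=a)) i" using b by auto
  ultimately show "b \<in> col S k y" using lower_setD[OF L ya] unfolding col_def by blast
qed

lemma mem_iff: "x \<in> S \<longleftrightarrow> x \<in> lattice_pts (Suc k) \<and> x k < hh S k (x(k:=0))"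
proof -
  have "x \<in> S \<longleftrightarrow> x k \<in> col S k (x(k:=0))" unfolding col_def by simp
  then show ?thesis using col_eq[of "x(k:=0)"] lower_set_sub[OF L] by auto
qed

lemma hh_le_card: "hh S k y \<le> card S"
proof -
  have "inj_on (\<lambda>t. y(k:=t)) (col S k y)" by (rule inj_onI) (metis fun_upd_same)
  moreover have "(\<lambda>t. y(k:=t)) ` col S k y \<subseteq> S" unfolding col_def by auto
  ultimately show ?thesis unfolding hh_def using card_inj_on_le[OF _ _ F] by blast
qed

lemma hh_up: assumes "i < k" shows "hh S k (up i y) \<le> hh S k y"
proof -
  have "col S k (up i y) \<subseteq> col S k y"
  proof
    fix t assume "t \<in> col S k (up i y)"
    then have u: "(up i y)(k:=t) \<in> S" unfolding col_def by simp
    have "(up i y)(k:=t) \<in> lattice_pts (Suc k)" using lower_set_sub[OF L u] .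
    then have "y(k:=t) \<in> lattice_pts (Suc k)" using assms unfolding lattice_pts_def up_def by auto
    moreover have "\<And>j. j < Suc k \<Longrightarrow> (y(k:=t)) j \<le> ((up i y)(k:=t)) j" using assms unfolding up_def by auto
    ultimately show "t \<in> col S k y" using lower_setD[OF L u] unfolding col_def by blast
  qed
  then show ?thesis unfolding hh_def by (rule card_mono[OF col_finite])
qed

lemma hh_pos_bx:
  assumes y: "y \<in> lattice_pts k" and pos: "hh S k y > 0"
  shows "y \<in> bx k (card S)"
proof -
  have "0 \<in> col S k y" using col_eq pos by auto
  then have y0: "y(k:=0) \<in> S" unfolding col_def by simp
  have "\<And>i. i < k \<Longrightarrow> y i < card S"
    using coord_bound[OF L F y0] by (metis fun_upd_other less_Suc_eq less_irrefl)
  then show ?thesis using y unfolding bx_def lattice_pts_def by auto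
qed

lemma hh_zero: "y \<in> lattice_pts k \<Longrightarrow> y \<notin> bx k (card S) \<Longrightarrow> hh S k y = 0"
  using hh_pos_bx by blast

lemma max_le_hh: assumes "k \<ge> 1" shows "Max ((\<lambda>i. hh S k (up i y)) ` {..<k}) \<le> hh S k y"
proof -
  have "0 \<in> {..<k}" using assms by simp
  then have "{..<k} \<noteq> {}" by blast
  then show ?thesis using hh_up by (subst Max_le_iff) auto
qed

lemma mm_le: "i < k \<Longrightarrow> mm S k y \<le> hh S k y - hh S k (up i y)"
  unfolding mm_def by (rule diff_le_mono2) (rule Max_ge, auto)

lemma card_sum_hh: "card S = (\<Sum>y\<in>bx k (card S). hh S k y)"
proof -
  let ?B = "bx k (card S)"
  have "bij_betw (\<lambda>x. (x(k:=0), x k)) S (Sigma ?B (\<lambda>y. {..<hh S k y}))"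
  proof (rule bij_betwI[where g = "\<lambda>(y,t). y(k:=t)"])
    show "(\<lambda>x. (x(k:=0), x k)) \<in> S \<rightarrow> Sigma ?B (\<lambda>y. {..<hh S k y})"
    proof
      fix x assume x: "x \<in> S"
      then have xl: "x \<in> lattice_pts (Suc k)" and h: "x k < hh S k (x(k:=0))" using mem_iff by auto
      have "x(k:=0) \<in> lattice_pts k" using xl unfolding lattice_pts_def by auto
      then have "x(k:=0) \<in> ?B" using hh_pos_bx h by simp
      then show "(x(k:=0), x k) \<in> Sigma ?B (\<lambda>y. {..<hh S k y})" using h by simp
    qed
    show "(\<lambda>(y,t). y(k:=t)) \<in> Sigma ?B (\<lambda>y. {..<hh S k y}) \<rightarrow> S"
    proof
      fix z assume "z \<in> Sigma ?B (\<lambda>y. {..<hh S k y})"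
      then obtain y t where z: "z = (y,t)" "y \<in> ?B" "t < hh S k y" by auto
      then have "t \<in> col S k y" using col_eq by auto
      then show "(\<lambda>(y,t). y(k:=t)) z \<in> S" using z unfolding col_def by simp
    qed
    fix x assume "x \<in> S" then show "(\<lambda>(y,t). y(k:=t)) (x(k:=0), x k) = x" by simp
  next
    fix z assume "z \<in> Sigma ?B (\<lambda>y. {..<hh S k y})"
    then obtain y t where z: "z = (y,t)" "y \<in> ?B" by auto
    then have "y k = 0" unfolding bx_def by auto
    then show "(\<lambda>x. (x(k:=0), x k)) ((\<lambda>(y,t). y(k:=t)) z) = z" using z by auto
  qed
  then have "card S = card (Sigma ?B (\<lambda>y. {..<hh S k y}))" by (rule bij_betw_same_card)
  also have "\<dots> = (\<Sum>y\<in>?B. hh S k y)" using finite_bx by (subst card_SigmaI) auto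
  finally show ?thesis .
qed

end

lemma up_lattice: "i < k \<Longrightarrow> y \<in> lattice_pts k \<Longrightarrow> up i y \<in> lattice_pts k"
  unfolding up_def lattice_pts_def by auto

lemma weighted_i:
  assumes L: "lower_set (Suc k) S" and F: "finite S" and i: "i < k"
  shows "(\<Sum>y\<in>bx k (card S). mm S k y * (y i + 1)) \<le> card S"
proof -
  let ?B = "bx k (card S)" and ?h = "hh S k"
  have fin: "finite ?B" by (rule finite_bx)
  have "(\<Sum>y\<in>?B. mm S k y * (y i + 1)) \<le> (\<Sum>y\<in>?B. (?h y - ?h (up i y)) * (y i + 1))"
    by (rule sum_mono) (rule mult_right_mono[OF mm_le[OF L F i]], simp)
  also have "\<dots> = card S"
  proof -
    have inj: "inj_on (up i) ?B"
    proof (rule inj_onI)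
      fix a b assume e: "up i a = up i b"
      show "a = b"
      proof
        fix j show "a j = b j" using fun_cong[OF e, of j] by (cases "j = i") (auto simp: up_def)
      qed
    qed
    let ?g = "\<lambda>z. ?h z * z i"
    have r1: "(\<Sum>y\<in>?B. ?h (up i y) * (y i + 1)) = (\<Sum>z\<in>up i ` ?B. ?g z)"
      by (subst sum.reindex[OF inj]) (simp add: up_def)
    let ?U = "up i ` ?B \<union> ?B"
    have r2: "(\<Sum>z\<in>up i ` ?B. ?g z) = (\<Sum>z\<in>?U. ?g z)"
    proof (rule sum.mono_neutral_left)
      show "finite ?U" using fin by simp
      show "\<forall>z\<in>?U - up i ` ?B. ?g z = 0"
      proof
        fix z assume z: "z \<in> ?U - up i ` ?B"
        show "?g z = 0"
        proof (rule ccontr)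
          assume "?g z \<noteq> 0"
          then have zi: "z i \<noteq> 0" by simp
          have zB: "z \<in> ?B" using z by auto
          let ?w = "z(i := z i - 1)"
          have "?w \<in> ?B" using zB unfolding bx_def by auto
          moreover have "up i ?w = z" using zi unfolding up_def by auto
          ultimately have "z \<in> up i ` ?B" by (metis image_eqI)
          then show False using z by blast
        qed
      qed
    qed auto
    have r3: "(\<Sum>z\<in>?B. ?g z) = (\<Sum>z\<in>?U. ?g z)"
    proof (rule sum.mono_neutral_left)
      show "finite ?U" using fin by simp
      show "\<forall>z\<in>?U - ?B. ?g z = 0"
      proof
        fix z assume z: "z \<in> ?U - ?B"
        then obtain y where y: "y \<in> ?B" "z = up i y" by auto
        have "y \<in> lattice_pts k" using y unfolding bx_def lattice_pts_def by auto
        then have "z \<in> lattice_pts k" using up_lattice i y by simp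
        then show "?g z = 0" using hh_zero[OF L F] z by simp
      qed
    qed auto
    have e1: "(\<Sum>y\<in>?B. (?h y - ?h (up i y)) * (y i + 1)) + (\<Sum>y\<in>?B. ?h (up i y) * (y i + 1))
        = (\<Sum>y\<in>?B. ?h y * (y i + 1))"
      unfolding sum.distrib[symmetric]
    proof (rule sum.cong[OF refl])
      fix y have "?h (up i y) \<le> ?h y" using hh_up[OF L F i] .
      then show "(?h y - ?h (up i y)) * (y i + 1) + ?h (up i y) * (y i + 1) = ?h y * (y i + 1)"
        by (metis add_mult_distrib le_add_diff_inverse2)
    qed
    have e2: "(\<Sum>y\<in>?B. ?h y * (y i + 1)) = (\<Sum>y\<in>?B. ?g y) + (\<Sum>y\<in>?B. ?h y)"
      by (simp add: sum.distrib algebra_simps)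
    have "(\<Sum>y\<in>?B. ?h y) = card S" using card_sum_hh[OF L F] by simp
    then show ?thesis using e1 e2 r1 r2 r3 by linarith
  qed
  finally show ?thesis .
qed

lemma weighted:
  assumes L: "lower_set (Suc k) S" and F: "finite S"
  shows "(\<Sum>y\<in>bx k (card S). mm S k y * (k + (\<Sum>i<k. y i))) \<le> k * card S"
proof -
  let ?B = "bx k (card S)"
  have "(\<Sum>y\<in>?B. mm S k y * (k + (\<Sum>i<k. y i))) = (\<Sum>y\<in>?B. \<Sum>i<k. mm S k y * (y i + 1))"
  proof (rule sum.cong[OF refl])
    fix y
    have "k + (\<Sum>i<k. y i) = (\<Sum>i<k. y i + 1)" by (subst sum.distrib) simp
    then show "mm S k y * (k + (\<Sum>i<k. y i)) = (\<Sum>i<k. mm S k y * (y i + 1))"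
      by (simp add: sum_distrib_left)
  qed
  also have "\<dots> = (\<Sum>i<k. \<Sum>y\<in>?B. mm S k y * (y i + 1))" by (rule sum.swap)
  also have "\<dots> \<le> (\<Sum>i<k. card S)" by (rule sum_mono) (rule weighted_i[OF L F], simp)
  finally show ?thesis by simp
qed

lemma enc_inj:
  assumes L1: "lower_set (Suc k) S1" and F1: "finite S1"
    and L2: "lower_set (Suc k) S2" and F2: "finite S2"
    and c: "card S1 = card S2" and k: "k \<ge> 1"
    and eq: "\<forall>y\<in>bx k (card S1). mm S1 k y = mm S2 k y"
  shows "S1 = S2"
proof -
  let ?B = "bx k (card S1)"
  have hq: "\<forall>y\<in>lattice_pts k. hh S1 k y = hh S2 k y"
  proof (rule ccontr)
    assume nq: "\<not> (\<forall>y\<in>lattice_pts k. hh S1 k y = hh S2 k y)"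
    define D where "D = {y\<in>lattice_pts k. hh S1 k y \<noteq> hh S2 k y}"
    have DB: "D \<subseteq> ?B"
    proof
      fix y assume y: "y \<in> D"
      then have yl: "y \<in> lattice_pts k" unfolding D_def by auto
      have "hh S1 k y > 0 \<or> hh S2 k y > 0" using y unfolding D_def by auto
      then show "y \<in> ?B" using hh_pos_bx[OF L1 F1 yl] hh_pos_bx[OF L2 F2 yl] c by auto
    qed
    have finD: "finite D" using finite_subset[OF DB finite_bx] .
    have neD: "D \<noteq> {}" using nq unfolding D_def by auto
    define s where "s = Max ((\<lambda>y. \<Sum>i<k. y i) ` D)"
    have "s \<in> (\<lambda>y. \<Sum>i<k. y i) ` D" unfolding s_def using finD neD by (intro Max_in) auto
    then obtain y where yD: "y \<in> D" and ys: "(\<Sum>i<k. y i) = s" by auto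
    have yl: "y \<in> lattice_pts k" using yD unfolding D_def by auto
    have upq: "hh S1 k (up i y) = hh S2 k (up i y)" if i: "i < k" for i
    proof (rule ccontr)
      assume ne: "hh S1 k (up i y) \<noteq> hh S2 k (up i y)"
      have "up i y \<in> D" using ne up_lattice[OF i yl] unfolding D_def by auto
      then have le: "(\<Sum>j<k. up i y j) \<le> s" unfolding s_def using finD by (auto intro: Max_ge)
      have "(\<Sum>j<k. up i y j) = (\<Sum>j<k. y j) + 1"
      proof -
        have "(\<Sum>j<k. up i y j) = (\<Sum>j<k. y j + (if j = i then 1 else 0))"
          by (rule sum.cong) (auto simp: up_def)
        also have "\<dots> = (\<Sum>j<k. y j) + 1" using i by (simp add: sum.distrib)
        finally show ?thesis .
      qed
      then show False using le ys by simp
    qed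
    have M: "Max ((\<lambda>i. hh S1 k (up i y)) ` {..<k}) = Max ((\<lambda>i. hh S2 k (up i y)) ` {..<k})"
      using upq by (metis (no_types, lifting) image_cong lessThan_iff)
    have "mm S1 k y = mm S2 k y" using eq DB yD by auto
    then have "hh S1 k y = hh S2 k y"
      using M max_le_hh[OF L1 F1 k, of y] max_le_hh[OF L2 F2 k, of y] unfolding mm_def by linarith
    then show False using yD unfolding D_def by auto
  qed
  show ?thesis
  proof (rule set_eqI)
    fix x
    have "x \<in> lattice_pts (Suc k) \<Longrightarrow> x(k:=0) \<in> lattice_pts k" unfolding lattice_pts_def by auto
    then show "x \<in> S1 \<longleftrightarrow> x \<in> S2" using mem_iff[OF L1 F1, of x] mem_iff[OF L2 F2, of x] hq by auto
  qed
qed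

lemma p_le_count:
  assumes k: "k \<ge> 1"
  shows "p (Suc k) n \<le> card {f \<in> PiE (bx k n) (\<lambda>_. {..n}). (\<Sum>y\<in>bx k n. f y * (k + (\<Sum>i<k. y i))) \<le> k * n}"
  unfolding p_def
proof (rule card_inj_on_le[where f = "\<lambda>S. restrict (mm S k) (bx k n)"])
  let ?C = "{S. lower_set (Suc k) S \<and> finite S \<and> card S = n}"
  show "inj_on (\<lambda>S. restrict (mm S k) (bx k n)) ?C"
  proof (rule inj_onI)
    fix S1 S2 assume "S1 \<in> ?C" "S2 \<in> ?C" and e: "restrict (mm S1 k) (bx k n) = restrict (mm S2 k) (bx k n)"
    then have L: "lower_set (Suc k) S1" "finite S1" "card S1 = n" "lower_set (Suc k) S2" "finite S2" "card S2 = n" by auto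
    have "\<forall>y\<in>bx k (card S1). mm S1 k y = mm S2 k y" using L(3) e by (metis restrict_apply')
    then show "S1 = S2" using enc_inj[OF L(1,2,4,5) _ k] L by simp
  qed
  show "(\<lambda>S. restrict (mm S k) (bx k n)) ` ?C \<subseteq> {f \<in> PiE (bx k n) (\<lambda>_. {..n}). (\<Sum>y\<in>bx k n. f y * (k + (\<Sum>i<k. y i))) \<le> k * n}"
  proof
    fix f assume "f \<in> (\<lambda>S. restrict (mm S k) (bx k n)) ` ?C"
    then obtain S where S: "S \<in> ?C" "f = restrict (mm S k) (bx k n)" by auto
    have L: "lower_set (Suc k) S" and F: "finite S" and c: "card S = n" using S by auto
    have "\<And>y. mm S k y \<le> n" using hh_le_card[OF L F] c unfolding mm_def by (meson diff_le_self le_trans)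
    then have "f \<in> PiE (bx k n) (\<lambda>_. {..n})" using S by auto
    moreover have "(\<Sum>y\<in>bx k n. f y * (k + (\<Sum>i<k. y i))) \<le> k * n"
      using weighted[OF L F] c S by simp
    ultimately show "f \<in> {f \<in> PiE (bx k n) (\<lambda>_. {..n}). (\<Sum>y\<in>bx k n. f y * (k + (\<Sum>i<k. y i))) \<le> k * n}" by simp
  qed
  show "finite {f \<in> PiE (bx k n) (\<lambda>_. {..n}). (\<Sum>y\<in>bx k n. f y * (k + (\<Sum>i<k. y i))) \<le> k * n}"
    by (rule finite_subset[of _ "PiE (bx k n) (\<lambda>_. {..n})"]) (auto intro: finite_PiE finite_bx)
qed

lemma geo_sum_le:
  fixes q :: real assumes "0 \<le> q" "q < 1"
  shows "(\<Sum>j\<le>N. q ^ j) \<le> 1 / (1 - q)"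
proof -
  have s: "summable (\<lambda>j. q ^ j)" using assms by (intro summable_geometric) simp
  have "(\<Sum>j\<le>N. q ^ j) = (\<Sum>j<Suc N. q ^ j)" by (simp add: lessThan_Suc_atMost)
  also have "\<dots> \<le> (\<Sum>j. q ^ j)" by (rule sum_le_suminf[OF s]) (use assms in auto)
  also have "\<dots> = 1 / (1 - q)" using suminf_geometric[of q] assms by simp
  finally show ?thesis .
qed

lemma card_weighted_le:
  fixes B :: "'a set" and W :: "'a \<Rightarrow> nat" and K N :: nat and \<tau> :: real
  assumes B: "finite B" and t: "\<tau> > 0" and K: "K > 0" and W: "\<And>y. y \<in> B \<Longrightarrow> W y > 0"
  shows "real (card {f \<in> PiE B (\<lambda>_. {..N}). (\<Sum>y\<in>B. f y * W y) \<le> K * N})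
     \<le> exp (\<tau> * N) * (\<Prod>y\<in>B. 1 / (1 - exp (- \<tau> * W y / K)))"
proof -
  let ?M = "{f \<in> PiE B (\<lambda>_. {..N}). (\<Sum>y\<in>B. f y * W y) \<le> K * N}"
  let ?q = "\<lambda>y. exp (- \<tau> * W y / K)"
  let ?T = "\<lambda>f. exp (\<tau> * N) * (\<Prod>y\<in>B. ?q y ^ f y)"
  have finP: "finite (PiE B (\<lambda>_. {..N}))" using B by (intro finite_PiE) auto
  have T1: "1 \<le> ?T f" if f: "f \<in> ?M" for f
  proof -
    have "(\<Prod>y\<in>B. ?q y ^ f y) = (\<Prod>y\<in>B. exp (- \<tau> * W y / K * f y))"
      by (rule prod.cong[OF refl]) (simp add: exp_of_nat_mult[symmetric] mult.commute)
    also have "\<dots> = exp (\<Sum>y\<in>B. - \<tau> * W y / K * f y)" using B by (simp add: exp_sum)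
    also have "(\<Sum>y\<in>B. - \<tau> * W y / K * f y) = - \<tau> / K * real (\<Sum>y\<in>B. f y * W y)"
      by (simp add: sum_distrib_left algebra_simps)
    finally have e: "(\<Prod>y\<in>B. ?q y ^ f y) = exp (- \<tau> / K * real (\<Sum>y\<in>B. f y * W y))" .
    have "real (\<Sum>y\<in>B. f y * W y) \<le> K * N" using f by (simp del: of_nat_sum) (metis of_nat_le_iff of_nat_mult)
    then have "- \<tau> / K * real (\<Sum>y\<in>B. f y * W y) \<ge> - \<tau> * N"
      using t K by (simp add: field_simps)
    then have "exp (\<tau> * N) * exp (- \<tau> / K * real (\<Sum>y\<in>B. f y * W y)) \<ge> exp (\<tau> * N) * exp (- \<tau> * N)"
      by (intro mult_left_mono) auto
    moreover have "exp (\<tau> * N) * exp (- \<tau> * N) = 1" by (simp add: exp_add[symmetric])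
    moreover have "?T f = exp (\<tau> * N) * exp (- \<tau> / K * real (\<Sum>y\<in>B. f y * W y))" using e by simp
    ultimately show ?thesis by linarith
  qed
  have "real (card ?M) = (\<Sum>f\<in>?M. 1)" by simp
  also have "\<dots> \<le> (\<Sum>f\<in>?M. ?T f)" by (rule sum_mono) (rule T1)
  also have "\<dots> \<le> (\<Sum>f\<in>PiE B (\<lambda>_. {..N}). ?T f)"
    by (rule sum_mono2[OF finP]) (auto intro!: mult_nonneg_nonneg prod_nonneg)
  also have "\<dots> = exp (\<tau> * N) * (\<Sum>f\<in>PiE B (\<lambda>_. {..N}). \<Prod>y\<in>B. ?q y ^ f y)"
    by (simp add: sum_distrib_left)
  also have "(\<Sum>f\<in>PiE B (\<lambda>_. {..N}). \<Prod>y\<in>B. ?q y ^ f y) = (\<Prod>y\<in>B. \<Sum>j\<le>N. ?q y ^ j)"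
    by (rule prod_sum_PiE[symmetric]) (use B in auto)
  also have "(\<Prod>y\<in>B. \<Sum>j\<le>N. ?q y ^ j) \<le> (\<Prod>y\<in>B. 1 / (1 - ?q y))"
  proof (rule prod_mono)
    fix y assume y: "y \<in> B"
    have "?q y < 1" using t K W[OF y] by (simp add: field_simps)
    then show "0 \<le> (\<Sum>j\<le>N. ?q y ^ j) \<and> (\<Sum>j\<le>N. ?q y ^ j) \<le> 1 / (1 - ?q y)"
      using geo_sum_le[of "?q y" N] by (auto intro: sum_nonneg)
  qed
  finally show ?thesis by simp
qed

lemma inv_one_minus_exp:
  fixes q :: real assumes "0 \<le> q" "q < 1"
  shows "1 / (1 - q) = exp (\<Sum>n. q ^ n / real n)"
proof -
  have "(\<lambda>n. - ((-(-q))^n) / real n) sums ln (1 + (-q))"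
    by (rule ln_series') (use assms in auto)
  then have "(\<lambda>n. - (q ^ n / real n)) sums ln (1 - q)" by simp
  then have "(\<lambda>n. q ^ n / real n) sums (- ln (1 - q))" using sums_minus by fastforce
  then have "(\<Sum>n. q ^ n / real n) = - ln (1 - q)" by (rule sums_unique[symmetric])
  then have "exp (\<Sum>n. q ^ n / real n) = inverse (1 - q)" using assms by (simp add: exp_minus)
  then show ?thesis by (simp add: inverse_eq_divide)
qed

lemma bx_sum_prod:
  fixes r :: real assumes r: "0 \<le> r" "r < 1"
  shows "(\<Sum>y\<in>bx k N. \<Prod>i<k. r ^ y i) \<le> (1 / (1 - r)) ^ k"
proof -
  have bij: "bij_betw (\<lambda>y. restrict y {..<k}) (bx k N) (PiE {..<k} (\<lambda>_. {..<N}))"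
  proof (rule bij_betwI[where g = "\<lambda>g i. if i < k then g i else 0"])
    show "(\<lambda>y. restrict y {..<k}) \<in> bx k N \<rightarrow> PiE {..<k} (\<lambda>_. {..<N})"
      unfolding bx_def by auto
    show "(\<lambda>g i. if i < k then g i else 0) \<in> PiE {..<k} (\<lambda>_. {..<N}) \<rightarrow> bx k N"
    proof
      fix g assume g: "g \<in> PiE {..<k} (\<lambda>_. {..<N})"
      have "\<And>i. i < k \<Longrightarrow> g i < N" using g by (auto simp: PiE_iff)
      then show "(\<lambda>i. if i < k then g i else 0) \<in> bx k N" unfolding bx_def by simp
    qed
    fix y assume "y \<in> bx k N" then show "(\<lambda>i. if i < k then restrict y {..<k} i else 0) = y"
      unfolding bx_def by (auto simp: fun_eq_iff)
  next
    fix g assume "g \<in> PiE {..<k} (\<lambda>_. {..<N})"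
    then show "restrict (\<lambda>i. if i < k then g i else 0) {..<k} = g"
      by (auto simp: fun_eq_iff PiE_def extensional_def)
  qed
  have "(\<Sum>y\<in>bx k N. \<Prod>i<k. r ^ y i) = (\<Sum>g\<in>PiE {..<k} (\<lambda>_. {..<N}). \<Prod>i<k. r ^ g i)"
  proof -
    have "(\<Sum>g\<in>PiE {..<k} (\<lambda>_. {..<N}). \<Prod>i<k. r ^ g i) = (\<Sum>y\<in>bx k N. \<Prod>i<k. r ^ restrict y {..<k} i)"
      by (rule sum.reindex_bij_betw[OF bij, symmetric])
    also have "\<dots> = (\<Sum>y\<in>bx k N. \<Prod>i<k. r ^ y i)" by (intro sum.cong prod.cong) auto
    finally show ?thesis by simp
  qed
  also have "\<dots> = (\<Prod>i<k. \<Sum>t<N. r ^ t)" by (rule prod_sum_PiE[symmetric]) auto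
  also have "\<dots> = (\<Sum>t<N. r ^ t) ^ k" by simp
  also have "\<dots> \<le> (1 / (1 - r)) ^ k"
  proof (rule power_mono)
    have s: "summable (\<lambda>j. r ^ j)" using r by (intro summable_geometric) simp
    have "(\<Sum>t<N. r ^ t) \<le> (\<Sum>j. r ^ j)" by (rule sum_le_suminf[OF s]) (use r in auto)
    then show "(\<Sum>t<N. r ^ t) \<le> 1 / (1 - r)" using suminf_geometric[of r] r by simp
  qed (use r in \<open>auto intro: sum_nonneg\<close>)
  finally show ?thesis .
qed

lemma one_minus_exp_ge: fixes s :: real assumes "s \<ge> 0" shows "s * exp (- s) \<le> 1 - exp (- s)"
proof -
  have "1 + s \<le> exp s" by (rule exp_ge_add_one_self)
  then have "(1 + s) * exp (-s) \<le> exp s * exp (-s)" by (intro mult_right_mono) auto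
  then show ?thesis by (simp add: exp_minus field_simps)
qed

lemma qsum_bound:
  fixes \<tau> :: real assumes t: "\<tau> > 0" and k: "k \<ge> 1" and j: "j \<ge> 1"
  shows "(\<Sum>y\<in>bx k N. exp (- \<tau> * real (k + (\<Sum>i<k. y i)) / k) ^ j) \<le> (k / (\<tau> * j)) ^ k"
proof -
  define r where "r = exp (- \<tau> * j / k)"
  have r: "0 \<le> r" "r < 1" unfolding r_def using t k j by auto
  have eq: "exp (- \<tau> * real (k + (\<Sum>i<k. y i)) / k) ^ j = exp (- \<tau> * j) * (\<Prod>i<k. r ^ y i)" for y
  proof -
    have "exp (- \<tau> * real (k + (\<Sum>i<k. y i)) / k) ^ j = exp (real j * (- \<tau> * real (k + (\<Sum>i<k. y i)) / k))"
      by (simp only: exp_of_nat_mult)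
    also have "real j * (- \<tau> * real (k + (\<Sum>i<k. y i)) / k) = - \<tau> * j + (\<Sum>i<k. real (y i) * (- \<tau> * j / k))"
      using k by (simp add: field_simps sum_distrib_left sum_divide_distrib sum_negf)
    also have "exp \<dots> = exp (- \<tau> * j) * exp (\<Sum>i<k. real (y i) * (- \<tau> * j / k))"
      by (rule exp_add)
    also have "exp (\<Sum>i<k. real (y i) * (- \<tau> * j / k)) = (\<Prod>i<k. exp (real (y i) * (- \<tau> * j / k)))"
      by (rule exp_sum) simp
    also have "(\<Prod>i<k. exp (real (y i) * (- \<tau> * j / k))) = (\<Prod>i<k. r ^ y i)"
      unfolding r_def by (rule prod.cong[OF refl]) (simp only: exp_of_nat_mult[symmetric])
    finally show ?thesis .
  qed
  have "(\<Sum>y\<in>bx k N. exp (- \<tau> * real (k + (\<Sum>i<k. y i)) / k) ^ j) = exp (- \<tau> * j) * (\<Sum>y\<in>bx k N. \<Prod>i<k. r ^ y i)"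
    unfolding sum_distrib_left by (rule sum.cong[OF refl]) (rule eq)
  also have "\<dots> \<le> exp (- \<tau> * j) * (1 / (1 - r)) ^ k"
    by (rule mult_left_mono[OF bx_sum_prod[OF r]]) simp
  also have "\<dots> \<le> (k / (\<tau> * j)) ^ k"
  proof -
    define s where "s = \<tau> * j / k"
    have s: "s > 0" unfolding s_def using t k j by auto
    have rs: "r = exp (- s)" unfolding r_def s_def by simp
    have "s * exp (- s) \<le> 1 - r" using one_minus_exp_ge[of s] s rs by simp
    then have "(s * exp (- s)) ^ k \<le> (1 - r) ^ k" by (rule power_mono) (use s in auto)
    then have A: "s ^ k * exp (- \<tau> * j) \<le> (1 - r) ^ k"
      using k by (simp add: power_mult_distrib s_def exp_of_nat_mult[symmetric] field_simps)
    have pos: "(1 - r) ^ k > 0" using r by simp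
    have "exp (- \<tau> * j) * (1 / (1 - r)) ^ k = exp (- \<tau> * j) / (1 - r) ^ k" by (simp add: power_divide)
    also have "\<dots> \<le> exp (- \<tau> * j) / (s ^ k * exp (- \<tau> * j))"
      by (rule divide_left_mono[OF A]) (use s pos in auto)
    also have "\<dots> = (1 / s) ^ k" by (simp add: power_divide)
    also have "(1 / s) = k / (\<tau> * j)" unfolding s_def using t k j by simp
    finally show ?thesis .
  qed
  finally show ?thesis .
qed

definition smp :: "nat \<Rightarrow> nat \<Rightarrow> (nat \<Rightarrow> nat) set" where
  "smp j m = {z \<in> lattice_pts j. (\<Sum>i<j. z i) < m}"

lemma smp_sub_bx: "smp j m \<subseteq> bx j m"
proof
  fix z assume z: "z \<in> smp j m"
  have "\<And>i. i < j \<Longrightarrow> z i < m"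
  proof -
    fix i assume i: "i < j"
    have "z i \<le> (\<Sum>i<j. z i)" using i by (intro member_le_sum) auto
    then show "z i < m" using z unfolding smp_def by auto
  qed
  then show "z \<in> bx j m" using z unfolding smp_def bx_def lattice_pts_def by auto
qed

lemma finite_smp: "finite (smp j m)"
  using finite_subset[OF smp_sub_bx finite_bx] .

lemma card_smp:
  assumes m: "m \<ge> 1"
  shows "card (smp j m) = (m - 1 + j) choose j"
proof -
  let ?L = "{l::nat list. length l = Suc j \<and> sum_list l = m - 1}"
  let ?phi = "\<lambda>z. map z [0..<j] @ [m - 1 - (\<Sum>i<j. z i)]"
  let ?psi = "\<lambda>l::nat list. (\<lambda>i. if i < j then l ! i else 0)"
  have sl: "sum_list (map z [0..<j]) = (\<Sum>i<j. z i)" for z :: "nat \<Rightarrow> nat"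
    by (simp add: interv_sum_list_conv_sum_set_nat atLeast0LessThan)
  have "bij_betw ?phi (smp j m) ?L"
  proof (rule bij_betwI[where g = ?psi])
    show "?phi \<in> smp j m \<rightarrow> ?L"
      using sl unfolding smp_def by auto
    show "?psi \<in> ?L \<rightarrow> smp j m"
    proof
      fix l assume l: "l \<in> ?L"
      have "l = take j l @ [l ! j]" using l take_Suc_conv_app_nth[of j l] by simp
      then have "sum_list l = sum_list (take j l) + l ! j" by (metis sum_list_append sum_list_simps(1) sum_list_simps(2) add_0_right)
      moreover have "sum_list (take j l) = (\<Sum>i<j. ?psi l i)"
        using l by (simp add: sum_list_sum_nth atLeast0LessThan min_def)
      ultimately have "(\<Sum>i<j. ?psi l i) \<le> m - 1" using l by auto
      then show "?psi l \<in> smp j m" using m unfolding smp_def lattice_pts_def by auto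
    qed
    fix z assume z: "z \<in> smp j m"
    show "?psi (?phi z) = z"
    proof
      fix i show "?psi (?phi z) i = z i"
        using z unfolding smp_def lattice_pts_def by (auto simp: nth_append)
    qed
  next
    fix l assume l: "l \<in> ?L"
    have tk: "map (?psi l) [0..<j] = take j l"
      using l by (intro nth_equalityI) auto
    have lt: "l = take j l @ [l ! j]" using l take_Suc_conv_app_nth[of j l] by simp
    have s1: "sum_list l = sum_list (take j l) + l ! j" using arg_cong[OF lt, of sum_list] by simp
    have s2: "sum_list (take j l) = (\<Sum>i<j. ?psi l i)"
      using l by (simp add: sum_list_sum_nth atLeast0LessThan min_def)
    have e0: "(\<Sum>i<j. ?psi l i) + l ! j = m - 1" using l s1 s2 by simp
    have e: "m - 1 - (\<Sum>i<j. ?psi l i) = l ! j" using e0 by arith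
    have "?phi (?psi l) = take j l @ [l ! j]" using tk e by simp
    then show "?phi (?psi l) = l" using lt[symmetric] by (rule trans)
  qed
  then have "card (smp j m) = card ?L" by (rule bij_betw_same_card)
  also have "\<dots> = (m - 1 + Suc j - 1) choose (m - 1)" by (rule card_length_sum_list)
  also have "\<dots> = (m - 1 + j) choose j" by (simp add: binomial_symmetric[of "m-1" "m - 1 + j", simplified])
  finally show ?thesis .
qed

lemma ln_series_pos:
  fixes q :: real assumes "0 \<le> q" "q < 1"
  shows "(\<lambda>n. q ^ n / real n) sums (- ln (1 - q))"
proof -
  have "(\<lambda>n. - ((-(-q))^n) / real n) sums ln (1 + (-q))"
    by (rule ln_series') (use assms in auto)
  then have "(\<lambda>n. - (q ^ n / real n)) sums ln (1 - q)" by simp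
  then show ?thesis using sums_minus by fastforce
qed

lemma inv_squares: "(\<lambda>n. 1 / real n ^ 2) sums (pi ^ 2 / 6)"
proof -
  have "(\<lambda>n. 1 / real (Suc n) ^ 2) sums (pi ^ 2 / 6)"
    using inverse_squares_sums by (simp add: add.commute)
  then show ?thesis by (subst (asm) sums_Suc_iff) simp
qed

lemma upper_core:
  fixes \<tau> :: real
  assumes k: "k \<ge> 1" and t: "\<tau> > 0"
  shows "real (p (Suc k) n) \<le> exp (\<tau> * n + (k / \<tau>) ^ k * (pi ^ 2 / 6))"
proof -
  let ?B = "bx k n"
  let ?W = "\<lambda>y. k + (\<Sum>i<k. y i)"
  let ?q = "\<lambda>y. exp (- \<tau> * real (?W y) / k)"
  have q01: "0 \<le> ?q y" "?q y < 1" for y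
  proof -
    have "?W y \<ge> 1" using k by simp
    then have W0: "real (?W y) \<ge> 1" by (metis of_nat_1 of_nat_le_iff)
    have "- \<tau> * real (?W y) < 0" using t W0 by (intro mult_neg_pos) auto
    then have "- \<tau> * real (?W y) / k < 0" using k by (intro divide_neg_pos) auto
    then show "0 \<le> ?q y" "?q y < 1" by auto
  qed
  have "real (p (Suc k) n) \<le> real (card {f \<in> PiE ?B (\<lambda>_. {..n}). (\<Sum>y\<in>?B. f y * ?W y) \<le> k * n})"
    using p_le_count[OF k, of n] by linarith
  also have "\<dots> \<le> exp (\<tau> * n) * (\<Prod>y\<in>?B. 1 / (1 - ?q y))"
    by (rule card_weighted_le) (use k t finite_bx in auto)
  also have "(\<Prod>y\<in>?B. 1 / (1 - ?q y)) = (\<Prod>y\<in>?B. exp (\<Sum>j. ?q y ^ j / real j))"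
    by (rule prod.cong[OF refl]) (rule inv_one_minus_exp[OF q01])
  also have "\<dots> = exp (\<Sum>y\<in>?B. \<Sum>j. ?q y ^ j / real j)" by (simp add: exp_sum finite_bx)
  also have "(\<Sum>y\<in>?B. \<Sum>j. ?q y ^ j / real j) = (\<Sum>j. \<Sum>y\<in>?B. ?q y ^ j / real j)"
    by (rule suminf_sum[symmetric]) (use ln_series_pos[OF q01] sums_summable in blast)
  also have "\<dots> \<le> (\<Sum>j. (k / \<tau>) ^ k * (1 / real j ^ 2))"
  proof (rule suminf_le)
    show "summable (\<lambda>j. \<Sum>y\<in>?B. ?q y ^ j / real j)"
      by (rule summable_sum) (use ln_series_pos[OF q01] sums_summable in blast)
    show "summable (\<lambda>j. (k / \<tau>) ^ k * (1 / real j ^ 2))"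
      by (rule summable_mult) (use inv_squares sums_summable in blast)
    fix j :: nat
    show "(\<Sum>y\<in>?B. ?q y ^ j / real j) \<le> (k / \<tau>) ^ k * (1 / real j ^ 2)"
    proof (cases "j = 0")
      case True then show ?thesis by simp
    next
      case False
      then have j: "j \<ge> 1" by simp
      have "(\<Sum>y\<in>?B. ?q y ^ j / real j) = (\<Sum>y\<in>?B. ?q y ^ j) / real j"
        by (simp add: sum_divide_distrib)
      also have "\<dots> \<le> (k / (\<tau> * j)) ^ k / real j"
        by (rule divide_right_mono[OF qsum_bound[OF t k j]]) simp
      also have "\<dots> = (k / \<tau>) ^ k * (1 / real j ^ (k + 1))"
        by (simp add: power_divide power_mult_distrib field_simps)
      also have "\<dots> \<le> (k / \<tau>) ^ k * (1 / real j ^ 2)"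
      proof (rule mult_left_mono)
        have "real j ^ 2 \<le> real j ^ (k + 1)" using j k by (intro power_increasing) auto
        then show "1 / real j ^ (k + 1) \<le> 1 / real j ^ 2" using j by (intro divide_left_mono) auto
      qed (use t in simp)
      finally show ?thesis .
    qed
  qed
  also have "\<dots> = (k / \<tau>) ^ k * (\<Sum>j. 1 / real j ^ 2)"
    by (rule suminf_mult) (use inv_squares sums_summable in blast)
  also have "\<dots> = (k / \<tau>) ^ k * (pi ^ 2 / 6)"
    using sums_unique[OF inv_squares] by simp
  finally have "real (p (Suc k) n) \<le> exp (\<tau> * n) * exp ((k / \<tau>) ^ k * (pi ^ 2 / 6))"
    by (smt (verit) exp_gt_zero mult_left_mono exp_le_cancel_iff)
  then show ?thesis by (simp add: exp_add)
qed

lemma upper_bound: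
  assumes k: "k \<ge> 1" and n: "n \<ge> 1"
  shows "ln (real (p (Suc k) n)) \<le> (k + pi ^ 2 / 6) * real n powr (1 - 1 / real (Suc k))"
proof -
  define d where "d = real (Suc k)"
  define \<tau> where "\<tau> = k * real n powr (- 1 / d)"
  have d: "d > 0" unfolding d_def by simp
  have t: "\<tau> > 0" unfolding \<tau>_def using k n by simp
  have e1: "\<tau> * n = k * real n powr (1 - 1 / d)"
  proof -
    have "real n powr (1 - 1 / d) = real n powr (- 1 / d + 1)" by simp
    also have "\<dots> = real n powr (- 1 / d) * real n powr 1" by (rule powr_add)
    also have "\<dots> = real n powr (- 1 / d) * real n" by simp
    finally show ?thesis unfolding \<tau>_def by (simp add: mult.assoc)
  qed
  have e2: "(k / \<tau>) ^ k = real n powr (1 - 1 / d)"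
  proof -
    have "k / \<tau> = real n powr (1 / d)" unfolding \<tau>_def using k n by (simp add: powr_minus_divide divide_simps)
    then have "(k / \<tau>) ^ k = real n powr (1 / d * k)" using n by (simp add: powr_realpow[symmetric] powr_powr) 
    also have "1 / d * k = 1 - 1 / d" unfolding d_def by (simp add: field_simps)
    finally show ?thesis .
  qed
  show ?thesis
  proof (cases "p (Suc k) n = 0")
    case True
    then show ?thesis by (simp add: pi_gt_zero)
  next
    case False
    have "ln (real (p (Suc k) n)) \<le> ln (exp (\<tau> * n + (k / \<tau>) ^ k * (pi ^ 2 / 6)))"
      using upper_core[OF k t, of n] False by (subst ln_le_cancel_iff) auto
    also have "\<dots> = (k + pi ^ 2 / 6) * real n powr (1 - 1 / d)"
      using e1 e2 by (simp add: algebra_simps)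
    finally show ?thesis unfolding d_def .
  qed
qed

definition TT :: "nat \<Rightarrow> nat \<Rightarrow> ((nat \<Rightarrow> nat) \<Rightarrow> nat) \<Rightarrow> (nat \<Rightarrow> nat) set" where
  "TT k m e = {x \<in> lattice_pts (Suc k). x(k:=0) \<in> smp k m \<and> x k + e (x(k:=0)) < 2 * (m - (\<Sum>i<k. x i))}"

lemma sum_upd_k: "(\<Sum>i<k. (x(k:=v)) i) = (\<Sum>i<k. x i :: nat)" for k :: nat
proof (rule sum.cong)
  fix i assume "i \<in> {..<k}" then have "i \<noteq> k" by simp
  then show "(x(k:=v)) i = x i" by simp
qed simp

lemma TT_lower:
  assumes e: "e \<in> PiE (smp k m) (\<lambda>_. {..2::nat})"
  shows "lower_set (Suc k) (TT k m e)"
  unfolding lower_set_def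
proof (intro conjI ballI impI)
  show "TT k m e \<subseteq> lattice_pts (Suc k)" unfolding TT_def by auto
  fix x x' assume x: "x \<in> TT k m e" and x': "x' \<in> lattice_pts (Suc k)" and le: "\<forall>i<Suc k. x' i \<le> x i"
  let ?s = "\<Sum>i<k. x i" and ?s' = "\<Sum>i<k. x' i"
  have xl: "x \<in> lattice_pts (Suc k)" and xy: "x(k:=0) \<in> smp k m"
    and xc: "x k + e (x(k:=0)) < 2 * (m - ?s)" using x unfolding TT_def by auto
  have sm: "?s < m" using xy unfolding smp_def by (simp add: sum_upd_k)
  have ss: "?s' \<le> ?s" using le by (intro sum_mono) auto
  have y'l: "x'(k:=0) \<in> lattice_pts k" using x' unfolding lattice_pts_def by auto
  have y'Y: "x'(k:=0) \<in> smp k m" using y'l ss sm unfolding smp_def by (simp add: sum_upd_k)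
  have e2: "e (x'(k:=0)) \<le> 2" using e y'Y by (auto simp: PiE_iff)
  have xk: "x' k \<le> x k" using le by auto
  have "x' k + e (x'(k:=0)) < 2 * (m - ?s')"
  proof (cases "?s' = ?s")
    case True
    have "\<forall>i<k. x' i = x i"
    proof (rule ccontr)
      assume "\<not> (\<forall>i<k. x' i = x i)"
      then obtain i where i: "i < k" "x' i \<noteq> x i" by auto
      then have "x' i < x i" using le by (metis le_neq_implies_less less_SucI)
      then have "?s' < ?s" using le i by (intro sum_strict_mono_ex1) auto
      then show False using True by simp
    qed
    then have "x'(k:=0) = x(k:=0)"
    proof -
      assume A: "\<forall>i<k. x' i = x i"
      show ?thesis
      proof
        fix i show "(x'(k:=0)) i = (x(k:=0)) i"
        proof (cases "i < k")
          case True then show ?thesis using A by auto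
        next
          case False
          show ?thesis
          proof (cases "i = k")
            case True then show ?thesis by simp
          next
            case False
            then have "i \<ge> Suc k" using \<open>\<not> i < k\<close> by simp
            then show ?thesis using x' xl unfolding lattice_pts_def by auto
          qed
        qed
      qed
    qed
    then show ?thesis using xc xk True by simp
  next
    case False
    then have "?s' < ?s" using ss by simp
    then show ?thesis using xc xk e2 sm by linarith
  qed
  then show "x' \<in> TT k m e" using x' y'Y unfolding TT_def by auto
qed

lemma TT_sub: "TT k m e \<subseteq> {x \<in> lattice_pts (Suc k). (\<Sum>i<k. x i) + x k div 2 < m}"
  unfolding TT_def by auto

lemma R_card:
  "finite {x \<in> lattice_pts (Suc k). (\<Sum>i<k. x i) + x k div 2 < m} \<and>
   card {x \<in> lattice_pts (Suc k). (\<Sum>i<k. x i) + x k div 2 < m} \<le> 2 * card (smp (Suc k) m)"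
proof -
  let ?R = "{x \<in> lattice_pts (Suc k). (\<Sum>i<k. x i) + x k div 2 < m}"
  let ?f = "\<lambda>x. (x(k := x k div 2), x k mod 2)"
  have inj: "inj_on ?f ?R"
  proof (rule inj_onI)
    fix a b assume "a \<in> ?R" "b \<in> ?R" and e: "?f a = ?f b"
    show "a = b"
    proof
      fix i show "a i = b i"
      proof (cases "i = k")
        case True
        have "(a(k := a k div 2)) k = (b(k := b k div 2)) k" using e by simp
        then have "a k div 2 = b k div 2" by simp
        moreover have "a k mod 2 = b k mod 2" using e by simp
        ultimately
        show ?thesis using True by (metis div_mult_mod_eq)
      next
        case False
        have "(a(k := a k div 2)) i = (b(k := b k div 2)) i" using e by simp
        then show ?thesis using False by simp
      qed
    qed
  qed
  have sub: "?f ` ?R \<subseteq> smp (Suc k) m \<times> {0,1}"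
  proof
    fix z assume "z \<in> ?f ` ?R"
    then obtain x where x: "x \<in> ?R" "z = ?f x" by auto
    have "x(k := x k div 2) \<in> lattice_pts (Suc k)" using x unfolding lattice_pts_def by auto
    moreover have "(\<Sum>i<Suc k. (x(k := x k div 2)) i) = (\<Sum>i<k. x i) + x k div 2"
      by (simp add: sum_upd_k)
    ultimately have "x(k := x k div 2) \<in> smp (Suc k) m" using x unfolding smp_def by auto
    moreover have "x k mod 2 \<in> {0,1}" by auto
    ultimately show "z \<in> smp (Suc k) m \<times> {0,1}" using x by auto
  qed
  have fin: "finite (smp (Suc k) m \<times> {0::nat,1})" using finite_smp by simp
  have "finite ?R" using finite_imageD[OF finite_subset[OF sub fin] inj] .
  moreover have "card ?R \<le> card (smp (Suc k) m \<times> {0::nat,1})" using card_inj_on_le[OF inj sub fin] .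
  moreover have "card (smp (Suc k) m \<times> {0::nat,1}) = 2 * card (smp (Suc k) m)" by (simp add: card_cartesian_product)
  ultimately show ?thesis by simp
qed

lemma TT_inj: "inj_on (TT k m) (PiE (smp k m) (\<lambda>_. {..2::nat}))"
proof (rule inj_onI)
  fix e1 e2 assume e1: "e1 \<in> PiE (smp k m) (\<lambda>_. {..2::nat})" and e2: "e2 \<in> PiE (smp k m) (\<lambda>_. {..2::nat})"
    and eq: "TT k m e1 = TT k m e2"
  show "e1 = e2"
  proof (rule PiE_ext[OF e1 e2])
    fix y assume y: "y \<in> smp k m"
    have yl: "y \<in> lattice_pts k" and ys: "(\<Sum>i<k. y i) < m" using y unfolding smp_def by auto
    have yk: "y k = 0" using yl unfolding lattice_pts_def by auto
    let ?c = "2 * (m - (\<Sum>i<k. y i))"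
    have col: "{t. y(k:=t) \<in> TT k m e} = {..<?c - e y}" if "e \<in> PiE (smp k m) (\<lambda>_. {..2::nat})" for e
    proof -
      have "y(k:=t) \<in> lattice_pts (Suc k)" for t using yl unfolding lattice_pts_def by auto
      moreover have "(y(k:=t))(k:=0) = y" for t using yk by (auto simp: fun_eq_iff)
      ultimately show ?thesis using y unfolding TT_def by (auto simp: sum_upd_k)
    qed
    have "card {..<?c - e1 y} = card {..<?c - e2 y}" using col[OF e1] col[OF e2] eq by simp
    then have "?c - e1 y = ?c - e2 y" by simp
    moreover have "e1 y \<le> 2" "e2 y \<le> 2" using e1 e2 y by (auto simp: PiE_iff)
    moreover have "?c \<ge> 2" using ys by simp
    ultimately show "e1 y = e2 y" by linarith
  qed
qed

lemma lower_family:
  assumes k: "k \<ge> 1" and m: "2 * card (smp (Suc k) m) \<le> n"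
  shows "3 ^ card (smp k m) \<le> (n + 1) * p (Suc k) n"
proof -
  let ?P = "PiE (smp k m) (\<lambda>_. {..2::nat})"
  have c1: "card ?P = 3 ^ card (smp k m)" by (simp add: card_PiE finite_smp)
  have c2: "card (TT k m ` ?P) = card ?P" using card_image[OF TT_inj] .
  have "card (TT k m ` ?P) \<le> (n + 1) * p (Suc k) n"
  proof (rule count_le_p)
    show "Suc k \<ge> 1" by simp
    fix T assume "T \<in> TT k m ` ?P"
    then obtain e where e: "e \<in> ?P" "T = TT k m e" by auto
    have "lower_set (Suc k) T" using TT_lower[OF e(1)] e by simp
    moreover have "finite T" using R_card finite_subset[OF TT_sub] e by blast
    moreover have "card T \<le> n"
      using R_card[of k m] card_mono[OF _ TT_sub, of k m e] e m by auto
    ultimately show "lower_set (Suc k) T \<and> finite T \<and> card T \<le> n" by simp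
  qed
  then show ?thesis using c1 c2 by simp
qed

lemma two_fact: "2 ^ k * fact k \<le> (real k + 1) ^ k"
proof (induction k)
  case 0 then show ?case by simp
next
  case (Suc k)
  have b: "2 * (real k + 1) ^ Suc k \<le> (real k + 2) ^ Suc k"
  proof -
    have "1 + real (Suc k) * (1 / (real k + 1)) \<le> (1 + 1 / (real k + 1)) ^ Suc k"
      by (rule Bernoulli_inequality) (simp add: field_simps)
    then have "2 \<le> ((real k + 2) / (real k + 1)) ^ Suc k"
      by (simp add: field_simps)
    then have "2 * (real k + 1) ^ Suc k \<le> ((real k + 2) / (real k + 1)) ^ Suc k * (real k + 1) ^ Suc k"
      by (intro mult_right_mono) auto
    also have "\<dots> = (real k + 2) ^ Suc k" by (simp add: power_divide)
    finally show ?thesis .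
  qed
  have "2 ^ Suc k * fact (Suc k) = 2 * (real k + 1) * (2 ^ k * fact k)" by (simp add: algebra_simps)
  also have "\<dots> \<le> 2 * (real k + 1) * (real k + 1) ^ k" by (rule mult_left_mono[OF Suc.IH]) simp
  also have "\<dots> = 2 * (real k + 1) ^ Suc k" by simp
  also have "\<dots> \<le> (real k + 2) ^ Suc k" by (rule b)
  finally show ?case by (simp add: add.commute)
qed

lemma pow_bound:
  fixes x :: real assumes "0 \<le> x" "real k * x < 1"
  shows "(1 + x) ^ k \<le> 1 / (1 - real k * x)"
  using assms(2)
proof (induction k)
  case 0 then show ?case by simp
next
  case (Suc k)
  have kx: "real k * x < 1" using Suc.prems assms(1) by (simp add: algebra_simps)
  have "(1 + x) ^ Suc k = (1 + x) * (1 + x) ^ k" by simp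
  also have "\<dots> \<le> (1 + x) * (1 / (1 - real k * x))" by (rule mult_left_mono[OF Suc.IH[OF kx]]) (use assms in simp)
  also have "\<dots> \<le> 1 / (1 - real (Suc k) * x)"
  proof -
    have p1: "1 - real (Suc k) * x > 0" using Suc.prems by simp
    have p2: "1 - real k * x > 0" using kx by simp
    have "(1 + x) * (1 - real (Suc k) * x) \<le> 1 - real k * x"
      using assms(1) by (simp add: algebra_simps)
    then show ?thesis using p1 p2 by (simp add: field_simps)
  qed
  finally show ?case .
qed

lemma X_bound:
  fixes X M :: real
  assumes k: "k \<ge> 1" and X: "X \<ge> 0" and M: "M \<ge> 0" and h: "X ^ Suc k < 2 * M ^ Suc k / fact (Suc k)"
  shows "X ^ k < M ^ k / fact k"
proof -
  let ?d = "Suc k"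
  have "(X ^ k) ^ ?d = (X ^ ?d) ^ k" by (metis power_mult mult.commute)
  also have "\<dots> < (2 * M ^ ?d / fact ?d) ^ k" using h X k by (intro power_strict_mono) auto
  also have "\<dots> = 2 ^ k * M ^ (?d * k) / (fact ?d) ^ k"
    by (simp add: power_divide power_mult_distrib power_mult[symmetric] power_add)
  also have "\<dots> \<le> M ^ (?d * k) / (fact k) ^ ?d"
  proof -
    have A: "2 ^ k * fact k \<le> (real k + 1) ^ k" by (rule two_fact)
    have "2 ^ k * (fact k :: real) ^ ?d = (2 ^ k * fact k) * fact k ^ k" by (simp add: algebra_simps)
    also have "\<dots> \<le> (real k + 1) ^ k * fact k ^ k" by (rule mult_right_mono[OF A]) simp
    also have "\<dots> = (fact ?d) ^ k" by (simp add: power_mult_distrib add.commute)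
    finally have B: "2 ^ k * (fact k :: real) ^ ?d \<le> (fact ?d) ^ k" .
    have pos1: "(fact ?d :: real) ^ k > 0" by simp
    have pos2: "(fact k :: real) ^ ?d > 0" by simp
    have Mp: "M ^ (?d * k) \<ge> 0" using M by simp
    have "2 ^ k * M ^ (?d * k) * (fact k) ^ ?d \<le> M ^ (?d * k) * (fact ?d) ^ k"
      using mult_left_mono[OF B Mp] by (simp add: algebra_simps)
    then show ?thesis using pos1 pos2 by (simp add: field_simps)
  qed
  also have "\<dots> = (M ^ k / fact k) ^ ?d" by (simp add: power_divide power_mult[symmetric] mult.commute power_add)
  finally have "(X ^ k) ^ ?d < (M ^ k / fact k) ^ ?d" .
  moreover have "M ^ k / fact k \<ge> 0" using M by simp
  ultimately show ?thesis by (rule power_less_imp_less_base)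
qed

lemma binom_lower:
  assumes m: "m \<ge> 1"
  shows "real m ^ k \<le> real ((m - 1 + k) choose k) * fact k"
proof -
  have "real ((m - 1 + k) choose k) * fact k = (\<Prod>i = 0..<k. real (m - 1 + k) - real i)"
    by (simp add: binomial_gbinomial gbinomial_mult_fact')
  also have "\<dots> \<ge> (\<Prod>i = 0..<k. real m)"
    by (rule prod_mono) (use m in auto)
  finally show ?thesis by simp
qed

lemma binom_upper: "real ((m + d) choose d) * fact d \<le> real (m + d) ^ d"
proof -
  have "((m + d) choose d) * fact d \<le> (m + d) ^ d" by (rule binomial_fact_pow)
  then show ?thesis by (metis of_nat_fact of_nat_le_iff of_nat_mult of_nat_power)
qed

lemma lb_main:
  fixes m n k :: nat
  assumes k: "k \<ge> 1" and m: "m \<ge> 1" and n: "n \<ge> 1"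
    and hfam: "3 ^ card (smp k m) \<le> (n + 1) * p (Suc k) n"
    and hn: "n < 2 * card (smp (Suc k) (m + 1))"
    and hstar: "real m ^ k * ln 3 - (real m + real (Suc k)) ^ k \<ge> fact k * real (Suc k) * ln (real m + real (Suc k))"
  shows "ln (real (p (Suc k) n)) > real n powr (1 - 1 / real (Suc k))"
proof -
  define d where "d = Suc k"
  define C where "C = card (smp k m)"
  define M where "M = real m + real d"
  have Mpos: "M > 0" unfolding M_def d_def by simp
  have C: "real m ^ k \<le> real C * fact k" unfolding C_def using card_smp[OF m] binom_lower[OF m] by simp
  have cd: "card (smp d (m + 1)) = (m + d) choose d" unfolding d_def using card_smp[of "m+1"] by simp
  have nM: "real n < 2 * M ^ d / fact d"
  proof -
    have "real n < 2 * real ((m + d) choose d)" using hn cd unfolding d_def by (metis of_nat_less_iff of_nat_mult of_nat_numeral)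
    also have "\<dots> \<le> 2 * (M ^ d / fact d)"
      using binom_upper[of m d] unfolding M_def by (simp add: field_simps)
    finally show ?thesis by simp
  qed
  define X where "X = real n powr (1 / real d)"
  have X0: "X \<ge> 0" unfolding X_def by simp
  have Xd: "X ^ d = real n"
  proof -
    have "X ^ d = real n powr (1 / real d * real d)" unfolding X_def using n
      by (simp add: powr_realpow[symmetric] powr_powr)
    also have "\<dots> = real n" unfolding d_def using n by simp
    finally show ?thesis .
  qed
  have Xk: "X ^ k = real n powr (1 - 1 / real d)"
  proof -
    have "X ^ k = real n powr (1 / real d * real k)" unfolding X_def using n
      by (simp add: powr_realpow[symmetric] powr_powr)
    also have "1 / real d * real k = 1 - 1 / real d" unfolding d_def by (simp add: field_simps)
    finally show ?thesis .
  qed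
  have XM: "X ^ k < M ^ k / fact k"
    by (rule X_bound[OF k X0]) (use Mpos Xd nM in \<open>auto simp: d_def\<close>)
  have ppos: "p (Suc k) n > 0"
  proof (rule ccontr)
    assume "\<not> ?thesis" then have "p (Suc k) n = 0" by simp
    then show False using hfam by simp
  qed
  have l1: "real C * ln 3 \<le> ln (real n + 1) + ln (real (p (Suc k) n))"
  proof -
    have "real (3 ^ C) \<le> real ((n + 1) * p (Suc k) n)" using hfam unfolding C_def by (metis of_nat_le_iff)
    then have "3 ^ C \<le> (real n + 1) * real (p (Suc k) n)" by (simp add: algebra_simps)
    then have "ln (3 ^ C) \<le> ln ((real n + 1) * real (p (Suc k) n))" using ppos by (subst ln_le_cancel_iff) auto
    then show ?thesis using ppos by (simp add: ln_realpow ln_mult)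
  qed
  have l2: "ln (real n + 1) \<le> real d * ln M"
  proof -
    have "Suc k \<le> (fact (Suc k) :: nat)" by (rule fact_ge_self)
    then have fa: "real (Suc k) \<le> fact (Suc k)" by (metis of_nat_fact of_nat_le_iff)
    have fb: "2 \<le> real (Suc k)" using k by simp
    have f2: "(2 :: real) \<le> fact d" unfolding d_def using fa fb by linarith
    have "real n + 1 \<le> 2 * M ^ d / fact d" using nM
    proof -
      have "real n + 1 \<le> 2 * real ((m + d) choose d)" using hn cd unfolding d_def by linarith
      also have "\<dots> \<le> 2 * (M ^ d / fact d)"
        using binom_upper[of m d] unfolding M_def by (simp add: field_simps)
      finally show ?thesis by simp
    qed
    also have "\<dots> \<le> M ^ d" using f2 Mpos by (simp add: field_simps)
    finally have "real n + 1 \<le> M ^ d" .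
    then have "ln (real n + 1) \<le> ln (M ^ d)" by (subst ln_le_cancel_iff) (use Mpos in auto)
    then show ?thesis using Mpos by (simp add: ln_realpow)
  qed
  have l3: "real m ^ k * ln 3 / fact k - real d * ln M \<ge> M ^ k / fact k"
  proof -
    have "fact k * real d * ln M \<le> real m ^ k * ln 3 - M ^ k" using hstar unfolding M_def d_def by simp
    then have "real d * ln M \<le> (real m ^ k * ln 3 - M ^ k) / fact k" by (simp add: field_simps)
    then show ?thesis by (simp add: diff_divide_distrib)
  qed
  have l4: "real m ^ k * ln 3 / fact k \<le> real C * ln 3"
  proof -
    have "real m ^ k / fact k \<le> real C" using C by (simp add: field_simps)
    moreover have "ln (3::real) \<ge> 0" by simp
    ultimately have "real m ^ k / fact k * ln 3 \<le> real C * ln 3" by (rule mult_right_mono)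
    then show ?thesis by simp
  qed
  have "real n powr (1 - 1 / real d) < M ^ k / fact k" using XM Xk by simp
  also have "\<dots> \<le> ln (real (p (Suc k) n))" using l1 l2 l3 l4 by linarith
  finally show ?thesis unfolding d_def .
qed

lemma e_ge: "exp 1 \<ge> (2.7::real)"
proof -
  have h: "\<bar>exp 1 - 5837465777 / 2147483648\<bar> \<le> (inverse (2 ^ 32)::real)" by (rule e_approx_32)
  have "inverse (2 ^ 32::real) = 1 / 4294967296" by simp
  then have "\<bar>exp 1 - 5837465777 / 2147483648\<bar> \<le> (1 / 4294967296::real)" using h by simp
  then show ?thesis unfolding abs_le_iff by linarith
qed

lemma ln3_ge: "ln (3::real) \<ge> 1.09"
proof -
  have e: "exp 1 < (2.72::real)" using e_less_272 by simp
  have "ln (exp 1 / (3::real)) \<le> exp 1 / 3 - 1" by (rule ln_le_minus_one) simp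
  moreover have "ln (exp 1 / (3::real)) = 1 - ln 3" by (simp add: ln_div)
  ultimately show ?thesis using e by simp
qed

lemma ln_tangent: fixes x c :: real assumes "x > 0" shows "ln x \<le> x / exp c + c - 1"
proof -
  have "ln (x / exp c) \<le> x / exp c - 1" by (rule ln_le_minus_one) (use assms in simp)
  moreover have "ln (x / exp c) = ln x - c" using assms by (simp add: ln_div)
  ultimately show ?thesis by simp
qed

lemma exp5: "exp (5::real) \<ge> 143"
proof -
  have "exp (5::real) = exp 1 ^ 5" by (simp add: exp_of_nat_mult[symmetric])
  also have "\<dots> \<ge> 2.7 ^ 5" by (rule power_mono[OF e_ge]) simp
  finally have "exp (5::real) \<ge> 2.7 ^ 5" .
  moreover have "(143::real) \<le> 2.7 ^ 5" by (simp add: eval_nat_numeral)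
  ultimately show ?thesis by linarith
qed

lemma star_d2:
  fixes m :: real assumes m: "m \<ge> 150"
  shows "m ^ 1 * ln 3 - (m + real (Suc 1)) ^ 1 \<ge> fact 1 * real (Suc 1) * ln (m + real (Suc 1))"
proof -
  have "ln (m + 2) \<le> (m + 2) / exp 5 + 5 - 1" by (rule ln_tangent) (use m in simp)
  also have "(m + 2) / exp 5 \<le> (m + 2) / 143" using exp5 m by (intro divide_left_mono) auto
  finally have l: "ln (m + 2) \<le> (m + 2) / 143 + 4" by simp
  have l3: "ln 3 \<ge> (109/100::real)" using ln3_ge by simp
  have ml: "m * ln 3 \<ge> m * (109/100)" using l3 m by (intro mult_left_mono) auto
  have l': "ln (m + 2) \<le> m / 143 + 2/143 + 4" using l by (simp add: add_divide_distrib)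
  have "2 * ln (m + 2) \<le> m * ln 3 - (m + 2)" using ml l' m by linarith
  then show ?thesis by simp
qed

lemma sqrt_ln: assumes "x > 0" shows "ln x \<le> 2 * sqrt x"
proof -
  have "ln (sqrt x) \<le> sqrt x - 1" by (rule ln_le_minus_one) (use assms in simp)
  moreover have "ln (sqrt x) = ln x / 2" using assms by (simp add: ln_sqrt)
  ultimately show ?thesis by simp
qed

lemma star_big:
  fixes m :: real and k :: nat
  assumes k: "k \<ge> 2" and m: "m \<ge> 1407 * (real k + 1) ^ 4"
  shows "m ^ k * ln 3 - (m + real (Suc k)) ^ k \<ge> fact k * real (Suc k) * ln (m + real (Suc k))"
proof -
  define d where "d = real k + 1"
  have d: "d \<ge> 3" unfolding d_def using k by simp
  have d4: "d ^ 4 \<ge> d ^ 2" using d by (intro power_increasing) auto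
  have d2: "d ^ 2 \<ge> d" using d by (simp add: power2_eq_square)
  have "(real k + 1) ^ 4 > 0" by simp
  then have mpos: "m > 0" using m by linarith
  have d20: "d ^ 2 \<ge> 0" by simp
  have md: "m \<ge> 200 * d ^ 2" using m d4 d20 unfolding d_def by linarith
  have mk: "m \<ge> real k" using md d2 d unfolding d_def by simp
  have "(m + d) ^ k \<le> m ^ k * (1 + 2 * real k * d / m)"
  proof -
    have x: "real k * (d / m) \<le> 1 / 2"
    proof -
      have "real k * d \<le> d ^ 2" unfolding d_def by (simp add: power2_eq_square)
      then have "real k * d \<le> m / 2" using md d d20 by linarith
      then show ?thesis using mpos by (simp add: field_simps)
    qed
    have "(m + d) ^ k = m ^ k * (1 + d / m) ^ k" using mpos by (simp add: power_mult_distrib[symmetric] field_simps)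
    also have "(1 + d / m) ^ k \<le> 1 / (1 - real k * (d / m))"
      by (rule pow_bound) (use x d mpos in auto)
    also have "1 / (1 - real k * (d / m)) \<le> 1 + 2 * (real k * (d / m))"
    proof -
      define a where "a = real k * (d / m)"
      have a0: "0 \<le> a" unfolding a_def using d mpos by simp
      have xa: "a \<le> 1 / 2" unfolding a_def using x .
      have "0 \<le> a * (1 - 2 * a)" using a0 xa by simp
      then have "1 \<le> (1 + 2 * a) * (1 - a)" by (simp add: algebra_simps)
      then have "1 / (1 - a) \<le> 1 + 2 * a" using xa by (simp add: field_simps)
      then show ?thesis unfolding a_def .
    qed
    finally show ?thesis using mpos by (simp add: mult_left_mono field_simps)
  qed
  then have A: "m ^ k * ln 3 - (m + d) ^ k \<ge> m ^ k * (ln 3 - 1 - 2 * real k * d / m)"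
    by (simp add: algebra_simps)
  have "2 * real k * d / m \<le> 0.01"
  proof -
    have "real k * d \<le> d ^ 2" unfolding d_def by (simp add: power2_eq_square)
    then have "2 * real k * d \<le> 0.01 * m" using md by simp
    then show ?thesis using mpos by (simp add: field_simps)
  qed
  then have "ln 3 - 1 - 2 * real k * d / m \<ge> 0.08" using ln3_ge by simp
  then have B: "m ^ k * ln 3 - (m + d) ^ k \<ge> 0.08 * m ^ k" using A mpos
    by (smt (verit) mult_left_mono zero_le_power mult.commute)
  have C: "fact k * d * ln (m + d) \<le> real k ^ k * d * (3 * sqrt m)"
  proof -
    have f: "(fact k :: real) \<le> real k ^ k" using fact_le_power[of k] by simp
    have "ln (m + d) \<le> 2 * sqrt (m + d)" by (rule sqrt_ln) (use mpos d in simp)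
    also have "sqrt (m + d) \<le> sqrt (2 * m)" using md d2 d by simp
    also have "sqrt (2 * m) = sqrt 2 * sqrt m" by (simp add: real_sqrt_mult)
    finally have "ln (m + d) \<le> 2 * sqrt 2 * sqrt m" by simp
    moreover have "2 * sqrt 2 \<le> (3::real)"
    proof -
      have "sqrt 2 \<le> sqrt ((3/2)^2::real)" by (subst real_sqrt_le_iff) (simp add: power2_eq_square)
      then show ?thesis by simp
    qed
    moreover have "2 * sqrt 2 * sqrt m \<le> 3 * sqrt m"
      by (rule mult_right_mono[OF \<open>2 * sqrt 2 \<le> (3::real)\<close>]) (use mpos in simp)
    ultimately have l: "ln (m + d) \<le> 3 * sqrt m" by linarith
    have lnpos: "ln (m + d) \<ge> 0" using mpos d by simp
    have "fact k * d * ln (m + d) \<le> real k ^ k * d * ln (m + d)"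
      using f d lnpos by (intro mult_right_mono) auto
    also have "\<dots> \<le> real k ^ k * d * (3 * sqrt m)" using l d by (intro mult_left_mono) auto
    finally show ?thesis .
  qed
  have D: "real k ^ k * d * (3 * sqrt m) \<le> 0.08 * m ^ k"
  proof -
    have s: "sqrt m \<ge> (75/2) * d ^ 2"
    proof -
      have q0: "(d ^ 2) ^ 2 = d ^ 4" by (simp flip: power_mult)
      have q: "((75/2) * d ^ 2) ^ 2 = (5625/4) * d ^ 4" unfolding power_mult_distrib q0 by (simp add: power2_eq_square)
      have "d ^ 4 \<ge> 0" by simp
      then have "(5625/4) * d ^ 4 \<le> m" using m unfolding d_def by linarith
      then have "((75/2) * d ^ 2) ^ 2 \<le> m" using q by simp
      then have "sqrt (((75/2) * d ^ 2) ^ 2) \<le> sqrt m" by (subst real_sqrt_le_iff) 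
      then show ?thesis using d by simp
    qed
    have "3 * real k * d \<le> 3 * d ^ 2" unfolding d_def by (simp add: power2_eq_square)
    also have "\<dots> \<le> 0.08 * sqrt m" using s by simp
    finally have e1: "3 * real k * d * sqrt m \<le> 0.08 * sqrt m * sqrt m"
      by (intro mult_right_mono) (use mpos in auto)
    have e2: "sqrt m * sqrt m = m" using mpos by simp
    obtain j where kj: "k = Suc j" using k by (cases k) auto
    have e3: "real k ^ k = real k * real k ^ j" unfolding kj by simp
    have e4: "m ^ k = m * m ^ j" unfolding kj by simp
    have e5: "real k ^ j \<le> m ^ j" using mk by (intro power_mono) auto
    have e6: "0.08 * sqrt m * sqrt m = 0.08 * m" using e2 by (simp only: mult.assoc)
    have e12: "3 * real k * d * sqrt m \<le> 0.08 * m" using e1 e6 by linarith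
    have "real k ^ k * d * (3 * sqrt m) = (3 * real k * d * sqrt m) * real k ^ j" using e3 by simp
    also have "\<dots> \<le> (0.08 * m) * real k ^ j" using e12 by (intro mult_right_mono) auto
    also have "\<dots> \<le> (0.08 * m) * m ^ j" using e5 mpos by (intro mult_left_mono) auto
    also have "\<dots> = 0.08 * m ^ k" using e4 by simp
    finally show ?thesis .
  qed
  have fin: "fact k * d * ln (m + d) \<le> m ^ k * ln 3 - (m + d) ^ k" using B C D by linarith
  have eqd: "real (Suc k) = d" unfolding d_def by simp
  show ?thesis unfolding eqd by (rule fin)
qed

lemma m_lower:
  fixes k m n :: nat
  assumes k: "k \<ge> 1" and n: "n \<ge> 1"
    and th: "real n \<ge> real (Suc k) powr (12 * real (Suc k) * ln (real (Suc k)))"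
    and hn: "real n < 2 * (real m + real (Suc k)) ^ Suc k / fact (Suc k)"
  shows "(k = 1 \<longrightarrow> real m \<ge> 150) \<and> (k \<ge> 2 \<longrightarrow> real m \<ge> 1407 * (real k + 1) ^ 4)"
proof -
  define d where "d = real (Suc k)"
  have d2: "d \<ge> 2" unfolding d_def using k by simp
  define M where "M = real m + d"
  have Mpos: "M > 0" unfolding M_def using d2 by simp
  have fa: "(2::real) \<le> fact (Suc k)"
  proof -
    have "Suc k \<le> (fact (Suc k) :: nat)" by (rule fact_ge_self)
    then have "real (Suc k) \<le> fact (Suc k)" by (metis of_nat_fact of_nat_le_iff)
    moreover have "real (Suc k) \<ge> 2" using k by simp
    ultimately show ?thesis by linarith
  qed
  have nM: "real n < M ^ Suc k"
  proof -
    have a: "2 * M ^ Suc k \<le> M ^ Suc k * fact (Suc k)"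
      using mult_right_mono[OF fa, of "M ^ Suc k"] Mpos by (simp add: mult.commute)
    have fp: "fact (Suc k) > (0::real)" by simp
    have "2 * M ^ Suc k / fact (Suc k) \<le> M ^ Suc k" using a pos_divide_le_eq[OF fp] by simp
    then show ?thesis using hn unfolding M_def d_def by simp
  qed
  define X where "X = real n powr (1 / d)"
  have XM: "X < M"
  proof -
    have "X < (M ^ Suc k) powr (1 / d)" unfolding X_def by (rule powr_less_mono2) (use nM d2 in auto)
    also have "(M ^ Suc k) powr (1 / d) = M"
    proof -
      have "M ^ Suc k = M powr (real (Suc k))" using Mpos by (rule powr_realpow[symmetric])
      then have "(M ^ Suc k) powr (1 / d) = M powr (real (Suc k) * (1 / d))" by (simp only: powr_powr)
      also have "real (Suc k) * (1 / d) = 1" unfolding d_def by simp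
      finally show ?thesis using Mpos by simp
    qed
    finally show ?thesis .
  qed
  have XL: "X \<ge> d powr (12 * ln d)"
  proof -
    have "(d powr (12 * d * ln d)) powr (1 / d) \<le> X" unfolding X_def
      by (rule powr_mono2) (use th d2 in \<open>auto simp: d_def\<close>)
    moreover have "(d powr (12 * d * ln d)) powr (1 / d) = d powr (12 * ln d)"
      using d2 by (simp add: powr_powr)
    ultimately show ?thesis by simp
  qed
  have A: "k = 1 \<longrightarrow> real m \<ge> 150"
  proof
    assume k1: "k = 1"
    then have dd: "d = 2" unfolding d_def by simp
    have "d powr (12 * ln d) = exp (12 * ln 2 * ln 2)" using dd by (simp add: powr_def)
    also have "exp (12 * ln 2 * ln (2::real)) \<ge> exp (16 / 3)"
    proof -
      have l: "ln (2::real) \<ge> 2 / 3" by (rule ln2_ge_two_thirds)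
      have "ln 2 * ln (2::real) \<ge> 2 / 3 * (2 / 3)" using l by (intro mult_mono) auto
      then have "16 / 3 \<le> 12 * ln 2 * ln (2::real)" by linarith
      then show ?thesis by simp
    qed
    finally have "X \<ge> exp (16 / 3)" using XL by simp
    moreover have "exp (16 / 3 :: real) \<ge> 190"
    proof -
      have "exp (16 / 3 :: real) = exp 5 * exp (1 / 3)" by (simp add: exp_add[symmetric])
      moreover have "exp (1 / 3 :: real) \<ge> 1 + 1 / 3" by (rule exp_ge_add_one_self)
      moreover have "143 * (1 + 1 / 3) \<le> exp 5 * exp (1 / 3 :: real)"
        by (rule mult_mono) (use exp5 \<open>exp (1 / 3 :: real) \<ge> 1 + 1 / 3\<close> in auto)
      ultimately have "exp (16 / 3 :: real) \<ge> 143 * (1 + 1 / 3)" by simp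
      then show ?thesis by simp
    qed
    ultimately have "M > 190" using XM by simp
    then show "real m \<ge> 150" unfolding M_def using dd by simp
  qed
  have B: "k \<ge> 2 \<longrightarrow> real m \<ge> 1407 * (real k + 1) ^ 4"
  proof
    assume k2: "k \<ge> 2"
    then have d3: "d \<ge> 3" unfolding d_def by simp
    have "ln d \<ge> ln 3" using d3 by simp
    then have "12 * ln d \<ge> 13" using ln3_ge by simp
    then have "d powr (12 * ln d) \<ge> d powr 13" using d3 by (intro powr_mono) auto
    also have "d powr 13 = d ^ 13"
    proof -
      have e: "d powr (real (13::nat)) = d ^ 13" using d3 by (intro powr_realpow) simp
      then show ?thesis by simp
    qed
    finally have "X \<ge> d ^ 13" using XL by simp
    then have mge: "real m > d ^ 13 - d" using XM unfolding M_def by simp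
    have "d ^ 9 \<ge> 3 ^ 9" using d3 by (intro power_mono) auto
    then have d9: "d ^ 9 \<ge> 1408" by simp
    have d4: "d ^ 4 \<ge> d" using d3 by (metis one_le_numeral order_trans power_increasing power_one_right numeral_le_iff semiring_norm(69) semiring_norm(72) le_numeral_extra(4) of_nat_numeral less_imp_le)
    have "d ^ 13 = d ^ 9 * d ^ 4" by (simp flip: power_add)
    also have "\<dots> \<ge> 1408 * d ^ 4" using d9 by (intro mult_right_mono) auto
    finally have "d ^ 13 - d \<ge> 1407 * d ^ 4" using d4 by simp
    then have "1407 * d ^ 4 \<le> real m" using mge by linarith
    moreover have "d = real k + 1" unfolding d_def by simp
    ultimately show "real m \<ge> 1407 * (real k + 1) ^ 4" by simp
  qed
  show ?thesis using A B by simp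
qed

lemma smp_card_ge:
  assumes j: "j \<ge> 1" shows "m \<le> card (smp j m)"
proof -
  let ?f = "\<lambda>t::nat. (\<lambda>i::nat. if i = 0 then t else 0)"
  have inj: "inj_on ?f {..<m}" by (rule inj_onI) (metis)
  have sub: "?f ` {..<m} \<subseteq> smp j m"
  proof
    fix z assume "z \<in> ?f ` {..<m}"
    then obtain t where t: "t < m" "z = ?f t" by auto
    have "(\<Sum>i<j. z i) = (\<Sum>i<j. if i = 0 then t else 0)" using t by simp
    also have "\<dots> = t" using j by (simp add: sum.delta)
    finally show "z \<in> smp j m" using t j unfolding smp_def lattice_pts_def by auto
  qed
  have "card (?f ` {..<m}) \<le> card (smp j m)" by (rule card_mono[OF finite_smp sub])
  then show ?thesis using card_image[OF inj] by simp
qed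

lemma binom_upper':
  "real ((m + d) choose d) \<le> (real m + real d) ^ d / fact d"
proof -
  have "real ((m + d) choose d) * fact d \<le> real (m + d) ^ d" by (rule binom_upper)
  then show ?thesis by (simp add: field_simps)
qed

theorem proposition1:
  fixes d n :: nat
  assumes "d \<ge> 2"
    and "real n \<ge> real d powr (12 * real d * ln (real d))"
  shows "1 < ln (real (p d n)) / real n powr (1 - 1 / real d)
       \<and> ln (real (p d n)) / real n powr (1 - 1 / real d) < real d ^ 2"
proof -
  obtain k where dk: "d = Suc k" and k: "k \<ge> 1" using assms(1) by (cases d) auto
  have th: "real n \<ge> real (Suc k) powr (12 * real (Suc k) * ln (real (Suc k)))" using assms(2) dk by simp
  have n2: "n \<ge> 2"
  proof -
    have l2: "ln (real (Suc k)) \<ge> ln 2" using k by simp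
    have "ln (2::real) \<ge> 2 / 3" by (rule ln2_ge_two_thirds)
    then have b: "ln (real (Suc k)) \<ge> 2 / 3" using l2 by linarith
    have a: "real (Suc k) \<ge> 2" using k by simp
    have "real (Suc k) * ln (real (Suc k)) \<ge> 2 * (2 / 3)" by (rule mult_mono[OF a b]) auto
    then have "12 * real (Suc k) * ln (real (Suc k)) \<ge> 1" by linarith
    then have "real (Suc k) powr (12 * real (Suc k) * ln (real (Suc k))) \<ge> real (Suc k) powr 1"
      by (intro powr_mono) auto
    then have "real n \<ge> real (Suc k)" using th by simp
    then show ?thesis using k by simp
  qed
  define A where "A = {m. 1 \<le> m \<and> 2 * card (smp (Suc k) m) \<le> n}"
  have 1: "1 \<in> A" unfolding A_def using card_smp[of 1 "Suc k"] n2 by simp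
  have Ab: "A \<subseteq> {..n}"
  proof
    fix m assume "m \<in> A"
    then have "2 * card (smp (Suc k) m) \<le> n" unfolding A_def by simp
    moreover have "m \<le> card (smp (Suc k) m)" by (rule smp_card_ge) simp
    ultimately show "m \<in> {..n}" by simp
  qed
  have finA: "finite A" using finite_subset[OF Ab] by simp
  define m where "m = Max A"
  have mA: "m \<in> A" unfolding m_def using finA 1 by (intro Max_in) auto
  have m1: "m \<ge> 1" and mn: "2 * card (smp (Suc k) m) \<le> n" using mA unfolding A_def by auto
  have hn: "n < 2 * card (smp (Suc k) (m + 1))"
  proof (rule ccontr)
    assume "\<not> ?thesis"
    then have "m + 1 \<in> A" unfolding A_def by simp
    then have "m + 1 \<le> m" unfolding m_def using finA by (intro Max_ge) auto
    then show False by simp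
  qed
  have fam: "3 ^ card (smp k m) \<le> (n + 1) * p (Suc k) n" by (rule lower_family[OF k mn])
  have hnr: "real n < 2 * (real m + real (Suc k)) ^ Suc k / fact (Suc k)"
  proof -
    have "card (smp (Suc k) (m + 1)) = (m + Suc k) choose (Suc k)" using card_smp[of "m+1" "Suc k"] by simp
    then have "real n < 2 * real ((m + Suc k) choose (Suc k))" using hn by (metis of_nat_less_iff of_nat_mult of_nat_numeral)
    also have "\<dots> \<le> 2 * ((real m + real (Suc k)) ^ Suc k / fact (Suc k))"
      by (rule mult_left_mono[OF binom_upper'[of m "Suc k"]]) simp
    finally show ?thesis by simp
  qed
  have ml: "(k = 1 \<longrightarrow> real m \<ge> 150) \<and> (k \<ge> 2 \<longrightarrow> real m \<ge> 1407 * (real k + 1) ^ 4)"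
    by (rule m_lower[OF k _ th hnr]) (use n2 in simp)
  have hstar: "real m ^ k * ln 3 - (real m + real (Suc k)) ^ k \<ge> fact k * real (Suc k) * ln (real m + real (Suc k))"
  proof (cases "k = 1")
    case True
    then show ?thesis using star_d2[of "real m"] ml by simp
  next
    case False
    then have "k \<ge> 2" using k by simp
    then show ?thesis using star_big[of k "real m"] ml by simp
  qed
  have low: "ln (real (p (Suc k) n)) > real n powr (1 - 1 / real (Suc k))"
    by (rule lb_main[OF k m1 _ fam hn hstar]) (use n2 in simp)
  have up: "ln (real (p (Suc k) n)) \<le> (k + pi ^ 2 / 6) * real n powr (1 - 1 / real (Suc k))"
    by (rule upper_bound[OF k]) (use n2 in simp)
  define P where "P = real n powr (1 - 1 / real (Suc k))"
  have Ppos: "P > 0" unfolding P_def using n2 by simp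
  have c: "real k + pi ^ 2 / 6 < real (Suc k) ^ 2"
  proof -
    have "pi ^ 2 < (4::real) ^ 2" using pi_less_4 pi_gt_zero by (intro power_strict_mono) auto
    then have "pi ^ 2 / 6 < 16 / 6" by simp
    moreover have "real (Suc k) ^ 2 = real k ^ 2 + 2 * real k + 1" by (simp add: power2_eq_square algebra_simps)
    moreover have "real k ^ 2 \<ge> 1" using k by simp
    moreover have "real k \<ge> 1" using k by simp
    ultimately show ?thesis by linarith
  qed
  have "ln (real (p (Suc k) n)) < real (Suc k) ^ 2 * P"
  proof -
    have "(k + pi ^ 2 / 6) * P < real (Suc k) ^ 2 * P" using c Ppos by (intro mult_strict_right_mono) auto
    then show ?thesis using up unfolding P_def by linarith
  qed
  then have u: "ln (real (p (Suc k) n)) / P < real (Suc k) ^ 2" using Ppos by (simp add: divide_less_eq)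
  have l: "1 < ln (real (p (Suc k) n)) / P" using low Ppos unfolding P_def by (simp add: less_divide_eq)
  show ?thesis using u l unfolding P_def dk by simp
qed

end
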